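(* Let $(G_a,G_b)\sim ER(n;\mathbf{p})$ on vertex set $V$, and assume $\varepsilon\triangleq \frac{p_{01}}{p_{0*}}+\frac{p_{10}}{p_{1*}}<1$. Let $u,v\in V$ with $d_a(u)>d_a(v)$, define $\varphi\triangleq d_a(u)\frac{p_{10}}{p_{1*}}+\bar d_a(v)\frac{p_{01}}{p_{0*}}$, let $k$ be a real number and let $\eta\in(0,\infty)$ (possibly depending on $n$). If \[ d_a(u)-d_a(v)\ \ge\ (1-\varepsilon)^{-1}\Big(k+4\max\big(\eta,\sqrt{\varphi\cdot\eta}\big)\Big), \] then, conditionally on $G_a$, $\Pr[d_b(u)-d_b(v)\le k]\le e^{-\eta}$.
   Context: Correlated Erdős–Rényi model $ER(n;\mathbf{p})$: $G_a$ and $G_b$ are random graphs on the same $n$-vertex set $V$; for each unordered pair $e$ of distinct vertices, independently, $(\mathbf 1[e\in E(G_a)],\mathbf 1[e\in E(G_b)])$ equals $(1,1),(1,0),(0,1),(0,0)$ with probabilities $p_{11},p_{10},p_{01},p_{00}$. Marginals: $p_{1*}=p_{11}+p_{10}$, $p_{0*}=p_{01}+p_{00}$. Notation: $d_a(x)$, $d_b(x)$ are the degrees of $x$ in $G_a$, $G_b$; $\bar d_a(x)=n-1-d_a(x)$ is the complementary degree of $x$ in $G_a$. *)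

theory Defs
  imports "HOL-Probability.Probability"
begin

definition pairs :: "'a set \<Rightarrow> 'a set set" where
  "pairs V = {e. e \<subseteq> V \<and> card e = 2}"

text \<open>Edge-pair distribution: q gives the law of (1[e in G_a], 1[e in G_b]).\<close>
definition p11 :: "(bool \<times> bool) pmf \<Rightarrow> real" where "p11 q = pmf q (True, True)"
definition p10 :: "(bool \<times> bool) pmf \<Rightarrow> real" where "p10 q = pmf q (True, False)"
definition p01 :: "(bool \<times> bool) pmf \<Rightarrow> real" where "p01 q = pmf q (False, True)"
definition p00 :: "(bool \<times> bool) pmf \<Rightarrow> real" where "p00 q = pmf q (False, False)"
definition p1s :: "(bool \<times> bool) pmf \<Rightarrow> real" where "p1s q = p11 q + p10 q"
definition p0s :: "(bool \<times> bool) pmf \<Rightarrow> real" where "p0s q = p01 q + p00 q"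

definition corr_ER :: "'a set \<Rightarrow> (bool \<times> bool) pmf \<Rightarrow> ('a set \<Rightarrow> bool \<times> bool) pmf" where
  "corr_ER V q = Pi_pmf (pairs V) (False, False) (\<lambda>_. q)"

definition graph_a :: "'a set \<Rightarrow> ('a set \<Rightarrow> bool \<times> bool) \<Rightarrow> 'a set set" where
  "graph_a V \<omega> = {e \<in> pairs V. fst (\<omega> e)}"

definition graph_b :: "'a set \<Rightarrow> ('a set \<Rightarrow> bool \<times> bool) \<Rightarrow> 'a set set" where
  "graph_b V \<omega> = {e \<in> pairs V. snd (\<omega> e)}"

definition deg :: "'a set set \<Rightarrow> 'a \<Rightarrow> nat" where
  "deg E x = card {e \<in> E. x \<in> e}"

end

theory Submission
  imports Defs
begin

lemma exp_quad: fixes x::real assumes "\<bar>x\<bar> \<le> 1" shows "exp x \<le> 1 + x + 2*x^2"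
proof (cases "x \<ge> 0")
  case True
  have "x^2 \<ge> 0" by simp
  then show ?thesis using exp_bound[of x] assms True by linarith
next
  case False
  define y where "y = -x"
  have y: "0 \<le> y" "y \<le> 1" using False assms y_def by auto
  have ey: "1 + y + y^2/2 \<le> exp y" by (rule exp_lower_Taylor_quadratic[OF y(1)])
  have pos: "0 \<le> 1 + x + 2*x^2" using y unfolding y_def power2_eq_square
    by (simp add: mult_nonneg_nonneg)
  have eq: "(1 + x + 2*x^2) * (1 + y + y^2/2) = 1 + 3/2*y^2 + 3/2*y^3 + y^4"
    unfolding y_def by (simp add: algebra_simps power2_eq_square power3_eq_cube power4_eq_xxxx)
  have "1 \<le> 1 + 3/2*y^2 + 3/2*y^3 + y^4" using y by simp
  also have "\<dots> = (1 + x + 2*x^2) * (1 + y + y^2/2)" using eq by simp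
  also have "\<dots> \<le> (1 + x + 2*x^2) * exp y" using ey pos by (rule mult_left_mono)
  finally have "1 \<le> (1 + x + 2*x^2) * exp y" .
  moreover have "exp x * exp y = 1" unfolding y_def by (simp add: exp_minus[symmetric] exp_add[symmetric])
  ultimately have "exp x * exp y \<le> (1 + x + 2*x^2) * exp y" by simp
  then show ?thesis by simp
qed

lemma bern_mgf: fixes a s :: real assumes "0 \<le> a" "\<bar>s\<bar> \<le> 1"
  shows "1 + a * (exp s - 1) \<le> exp (a * (s + 2 * s^2))"
proof -
  have "exp s - 1 \<le> s + 2 * s\<^sup>2" using exp_quad[OF assms(2)] by simp
  hence "a * (exp s - 1) \<le> a * (s + 2 * s\<^sup>2)" using assms(1) by (rule mult_left_mono)
  moreover have "1 + a * (exp s - 1) \<le> exp (a * (exp s - 1))" by (rule exp_ge_add_one_self)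
  ultimately show ?thesis by (meson exp_le_cancel_iff order_trans)
qed

lemma lemA: fixes a l :: real assumes "0 \<le> a" "0 \<le> l" "l \<le> 1"
  shows "(1 - a) * exp (- l) + a \<le> exp (- (l * (1 - a)) + 2 * l^2 * a)"
proof -
  have "(1 - a) * exp (- l) + a = exp (-l) * (1 + a * (exp l - 1))"
    by (simp add: algebra_simps exp_minus field_simps)
  also have "\<dots> \<le> exp (-l) * exp (a * (l + 2 * l^2))"
    using bern_mgf[of a l] assms by (intro mult_left_mono) auto
  also have "\<dots> = exp (- (l * (1 - a)) + 2 * l^2 * a)" by (simp add: exp_add[symmetric] algebra_simps)
  finally show ?thesis .
qed

lemma lemC: fixes a l :: real assumes "0 \<le> a" "0 \<le> l" "l \<le> 1"
  shows "(1 - a) * exp l + a \<le> exp (l * (1 - a) + 2 * l^2 * a)"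
proof -
  have "(1 - a) * exp l + a = exp l * (1 + a * (exp (-l) - 1))"
    by (simp add: algebra_simps exp_minus field_simps)
  also have "\<dots> \<le> exp l * exp (a * (-l + 2 * (-l)^2))"
    using bern_mgf[of a "-l"] assms by (intro mult_left_mono) auto
  also have "\<dots> = exp (l * (1 - a) + 2 * l^2 * a)" by (simp add: exp_add[symmetric] algebra_simps)
  finally show ?thesis .
qed

lemma lemB: fixes a l :: real assumes "0 \<le> a" "0 \<le> l" "l \<le> 1"
  shows "a * exp (- l) + (1 - a) \<le> exp (- (l * a) + 2 * l^2 * a)"
proof -
  have "a * exp (- l) + (1 - a) = 1 + a * (exp (-l) - 1)" by (simp add: algebra_simps)
  also have "\<dots> \<le> exp (a * (-l + 2 * (-l)^2))" using bern_mgf[of a "-l"] assms by auto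
  also have "\<dots> = exp (- (l * a) + 2 * l^2 * a)" by (simp add: algebra_simps)
  finally show ?thesis .
qed

lemma lemD: fixes a l :: real assumes "0 \<le> a" "0 \<le> l" "l \<le> 1"
  shows "a * exp l + (1 - a) \<le> exp (l * a + 2 * l^2 * a)"
proof -
  have "a * exp l + (1 - a) = 1 + a * (exp l - 1)" by (simp add: algebra_simps)
  also have "\<dots> \<le> exp (a * (l + 2 * l^2))" using bern_mgf[of a "l"] assms by auto
  also have "\<dots> = exp (l * a + 2 * l^2 * a)" by (simp add: algebra_simps)
  finally show ?thesis .
qed

lemma cond_expect:
  fixes q :: "(bool \<times> bool) pmf" and f :: "bool \<Rightarrow> real"
  assumes ne: "set_pmf q \<inter> {x. fst x = b} \<noteq> {}"
  shows "measure_pmf.expectation (cond_pmf q {x. fst x = b}) (\<lambda>x. f (snd x)) =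
     (pmf q (b,True) * f True + pmf q (b,False) * f False) / (pmf q (b,True) + pmf q (b,False))"
proof -
  have S: "{x. fst x = b} = {(b,True),(b,False)}" by auto
  have m: "measure q {x. fst x = b} = pmf q (b,True) + pmf q (b,False)"
    unfolding S by (subst measure_measure_pmf_finite) auto
  have "measure_pmf.expectation (cond_pmf q {x. fst x = b}) (\<lambda>x. f (snd x)) =
     (\<Sum>a\<in>{(b,True),(b,False)}. pmf (cond_pmf q {x. fst x = b}) a *\<^sub>R f (snd a))"
    by (rule integral_measure_pmf) (use ne in auto)
  also have "\<dots> = (pmf q (b,True) * f True + pmf q (b,False) * f False) / (pmf q (b,True) + pmf q (b,False))"
    using ne by (simp add: pmf_cond m add_divide_distrib)
  finally show ?thesis .
qed

lemma finite_pairs: "finite V \<Longrightarrow> finite (pairs V)"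
  unfolding pairs_def by (rule finite_subset[of _ "Pow V"]) auto

lemma pair_cases: assumes "e \<in> pairs V" "u \<in> e" shows "\<exists>w. w \<in> V \<and> w \<noteq> u \<and> e = {u, w}"
proof -
  have eV: "e \<subseteq> V" and c2: "card e = 2" using assms(1) unfolding pairs_def by auto
  from c2 obtain x y where xy: "e = {x,y}" "x \<noteq> y" by (meson card_2_iff)
  show ?thesis
  proof -
    have h: "e = {x,y}" "x \<noteq> y" "e \<subseteq> V" "u \<in> e" using xy eV assms(2) by auto
    show ?thesis
    proof (cases "u = x")
      case True
      then show ?thesis using h by (intro exI[of _ y]) auto
    next
      case False
      then have "u = y" using h by auto
      then show ?thesis using h by (intro exI[of _ x]) (auto simp: insert_commute)
    qed
  qed
qed

lemma card_Su: assumes "finite V" "u \<in> V" "v \<in> V" "u \<noteq> v"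
  shows "card {e\<in>pairs V. u\<in>e \<and> v\<notin>e} = card V - 2"
proof -
  have eq: "{e\<in>pairs V. u\<in>e \<and> v\<notin>e} = (\<lambda>w. {u,w}) ` (V - {u,v})"
  proof
    show "{e\<in>pairs V. u\<in>e \<and> v\<notin>e} \<subseteq> (\<lambda>w. {u,w}) ` (V - {u,v})"
    proof
      fix e assume "e \<in> {e\<in>pairs V. u\<in>e \<and> v\<notin>e}"
      then have e: "e \<in> pairs V" "u \<in> e" "v \<notin> e" by auto
      obtain w where w: "w \<in> V" "w \<noteq> u" "e = {u,w}" using pair_cases[OF e(1) e(2)] by (elim exE conjE)
      have "w \<noteq> v" using e(3) w(3) by auto
      then have "w \<in> V - {u,v}" using w by blast
      then have "{u,w} \<in> (\<lambda>w. {u,w}) ` (V - {u,v})" by (rule imageI)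
      then show "e \<in> (\<lambda>w. {u,w}) ` (V - {u,v})" using w(3) by simp
    qed
  next
    show "(\<lambda>w. {u,w}) ` (V - {u,v}) \<subseteq> {e\<in>pairs V. u\<in>e \<and> v\<notin>e}"
      using assms by (auto simp: pairs_def)
  qed
  have inj: "inj_on (\<lambda>w. {u,w}) (V - {u,v})"
    by (auto simp: inj_on_def doubleton_eq_iff)
  have "card (V - {u,v}) = card V - 2" using assms by (subst card_Diff_subset) auto
  then show ?thesis unfolding eq using card_image[OF inj] by simp
qed

lemma count_facts:
  assumes "finite V" "u \<in> V" "v \<in> V" "u \<noteq> v" "g \<subseteq> pairs V"
  shows "card {e\<in>pairs V. u\<in>e \<and> v\<notin>e \<and> e\<in>g} + card {e\<in>pairs V. u\<in>e \<and> v\<notin>e \<and> e\<notin>g} = card V - 2"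
    and "\<exists>t\<le>1. deg g u = card {e\<in>pairs V. u\<in>e \<and> v\<notin>e \<and> e\<in>g} + t"
    and "deg g u - card {e\<in>pairs V. u\<in>e \<and> v\<notin>e \<and> e\<in>g} = deg g v - card {e\<in>pairs V. v\<in>e \<and> u\<notin>e \<and> e\<in>g}"
    and "deg g u \<ge> card {e\<in>pairs V. u\<in>e \<and> v\<notin>e \<and> e\<in>g}"
proof -
  have fin: "finite (pairs V)" using assms finite_pairs by auto
  have "card {e\<in>pairs V. u\<in>e \<and> v\<notin>e \<and> e\<in>g} + card {e\<in>pairs V. u\<in>e \<and> v\<notin>e \<and> e\<notin>g}
     = card ({e\<in>pairs V. u\<in>e \<and> v\<notin>e \<and> e\<in>g} \<union> {e\<in>pairs V. u\<in>e \<and> v\<notin>e \<and> e\<notin>g})"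
    by (rule card_Un_disjoint[symmetric]) (use fin in auto)
  also have "{e\<in>pairs V. u\<in>e \<and> v\<notin>e \<and> e\<in>g} \<union> {e\<in>pairs V. u\<in>e \<and> v\<notin>e \<and> e\<notin>g} = {e\<in>pairs V. u\<in>e \<and> v\<notin>e}" by auto
  finally show "card {e\<in>pairs V. u\<in>e \<and> v\<notin>e \<and> e\<in>g} + card {e\<in>pairs V. u\<in>e \<and> v\<notin>e \<and> e\<notin>g} = card V - 2"
    using card_Su[OF assms(1-4)] by simp
  define T where "T = {e\<in>g. u\<in>e \<and> v\<in>e}"
  have T1: "card T \<le> 1"
  proof -
    have "T \<subseteq> {{u,v}}"
    proof
      fix e assume "e \<in> T"
      then have ee: "e \<in> pairs V" "u \<in> e" "v \<in> e" using assms(5) T_def by auto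
      obtain w where "e = {u,w}" "w \<noteq> u" using pair_cases[OF ee(1) ee(2)] by (elim exE conjE)
      then show "e \<in> {{u,v}}" using \<open>v \<in> e\<close> assms(4) by auto
    qed
    then have "card T \<le> card {{u,v}}" by (rule card_mono[rotated]) simp
    then show ?thesis by simp
  qed
  have finT: "finite T" using assms(5) fin T_def by (auto intro: finite_subset)
  have du: "deg g u = card {e\<in>pairs V. u\<in>e \<and> v\<notin>e \<and> e\<in>g} + card T"
  proof -
    have eq: "{e\<in>g. u\<in>e} = {e\<in>pairs V. u\<in>e \<and> v\<notin>e \<and> e\<in>g} \<union> T" using assms(5) T_def by auto
    have "card ({e\<in>pairs V. u\<in>e \<and> v\<notin>e \<and> e\<in>g} \<union> T) = card {e\<in>pairs V. u\<in>e \<and> v\<notin>e \<and> e\<in>g} + card T"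
      by (rule card_Un_disjoint) (use fin finT T_def in auto)
    then show ?thesis unfolding deg_def eq .
  qed
  have dv: "deg g v = card {e\<in>pairs V. v\<in>e \<and> u\<notin>e \<and> e\<in>g} + card T"
  proof -
    have eq: "{e\<in>g. v\<in>e} = {e\<in>pairs V. v\<in>e \<and> u\<notin>e \<and> e\<in>g} \<union> T" using assms(5) T_def by auto
    have "card ({e\<in>pairs V. v\<in>e \<and> u\<notin>e \<and> e\<in>g} \<union> T) = card {e\<in>pairs V. v\<in>e \<and> u\<notin>e \<and> e\<in>g} + card T"
      by (rule card_Un_disjoint) (use fin finT T_def in auto)
    then show ?thesis unfolding deg_def eq .
  qed
  show "\<exists>t\<le>1. deg g u = card {e\<in>pairs V. u\<in>e \<and> v\<notin>e \<and> e\<in>g} + t" using du T1 by blast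
  show "deg g u - card {e\<in>pairs V. u\<in>e \<and> v\<notin>e \<and> e\<in>g} = deg g v - card {e\<in>pairs V. v\<in>e \<and> u\<notin>e \<and> e\<in>g}"
    using du dv by simp
  show "deg g u \<ge> card {e\<in>pairs V. u\<in>e \<and> v\<notin>e \<and> e\<in>g}" using du by simp
qed

lemma caseG: fixes a l :: real assumes "0 \<le> a" "0 \<le> l" "l \<le> 1"
  shows "(1-a)*exp(-l*(of_bool cu - of_bool cv)) + a \<le>
     exp(-l*((of_bool cu - of_bool cv)*(1-a)) + 2*l^2*(of_bool(cu\<noteq>cv)*a))"
  using lemA[OF assms] lemC[OF assms] by (cases cu; cases cv) (auto simp: algebra_simps)

lemma caseN: fixes a l :: real assumes "0 \<le> a" "0 \<le> l" "l \<le> 1"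
  shows "a*exp(-l*(of_bool cu - of_bool cv)) + (1-a) \<le>
     exp(-l*((of_bool cu - of_bool cv)*a) + 2*l^2*(of_bool(cu\<noteq>cv)*a))"
  using lemB[OF assms] lemD[OF assms] by (cases cu; cases cv) (auto simp: algebra_simps)

lemma frac01: fixes x y :: real assumes "0 \<le> x" "0 \<le> y" shows "0 \<le> x / (y + x) \<and> x / (y + x) \<le> 1"
  using assms by (cases "y + x = 0") (auto simp: divide_le_eq_1)

lemma mix1: fixes a b X :: real assumes "0 < a + b"
  shows "(a * X + b) / (a + b) = (1 - b / (a + b)) * X + b / (a + b)"
proof -
  have "1 - b / (a + b) = a / (a + b)" using assms by (simp add: field_simps)
  then show ?thesis by (simp add: add_divide_distrib)
qed

lemma mix2: fixes a b X :: real assumes "0 < a + b"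
  shows "(a * X + b) / (a + b) = a / (a + b) * X + (1 - a / (a + b))"
proof -
  have "1 - a / (a + b) = b / (a + b)" using assms by (simp add: field_simps)
  then show ?thesis by (simp add: add_divide_distrib)
qed

theorem lemma4p2:
  fixes V :: "'a set" and q :: "(bool \<times> bool) pmf" and g :: "'a set set"
    and u v :: 'a and k \<eta> :: real
  assumes "finite V"
    and "p01 q / p0s q + p10 q / p1s q < 1"
    and "u \<in> V" and "v \<in> V"
    and "set_pmf (corr_ER V q) \<inter> {\<omega>. graph_a V \<omega> = g} \<noteq> {}"
    and "deg g u > deg g v"
    and "\<eta> > 0"
    and "real (deg g u) - real (deg g v) \<ge>
           inverse (1 - (p01 q / p0s q + p10 q / p1s q)) *
           (k + 4 * max \<eta> (sqrt ((real (deg g u) * (p10 q / p1s q)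
                 + real (card V - 1 - deg g v) * (p01 q / p0s q)) * \<eta>)))"
  shows "measure_pmf.prob (cond_pmf (corr_ER V q) {\<omega>. graph_a V \<omega> = g})
           {\<omega>. real (deg (graph_b V \<omega>) u) - real (deg (graph_b V \<omega>) v) \<le> k}
         \<le> exp (- \<eta>)"
proof -
  define P where "P = pairs V"
  define A where "A = {\<omega>::'a set \<Rightarrow> bool\<times>bool. graph_a V \<omega> = g}"
  define \<alpha> where "\<alpha> = p10 q / p1s q"
  define \<beta> where "\<beta> = p01 q / p0s q"
  have uv: "u \<noteq> v" using assms(6) by auto
  have finP: "finite P" using assms(1) finite_pairs P_def by auto
  have Q: "corr_ER V q = Pi_pmf P (False,False) (\<lambda>_. q)" by (simp add: corr_ER_def P_def)
  obtain \<omega>0 where w0: "\<omega>0 \<in> set_pmf (corr_ER V q)" "graph_a V \<omega>0 = g" using assms(5) by auto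
  have w0P: "\<And>e. e \<in> P \<Longrightarrow> \<omega>0 e \<in> set_pmf q"
    using w0(1) unfolding Q set_Pi_pmf[OF finP] PiE_dflt_def by auto
  have gdef: "g = {e\<in>P. fst (\<omega>0 e)}" using w0(2) by (simp add: graph_a_def P_def)
  have gP: "g \<subseteq> P" using gdef by auto
  have ne: "\<And>e. e \<in> P \<Longrightarrow> set_pmf q \<inter> {x. fst x = (e\<in>g)} \<noteq> {}" using w0P gdef by auto
  define cq where "cq e = cond_pmf q {x. fst x = (e\<in>g)}" for e
  have Aeq: "A = Pi P (\<lambda>e. {x. fst x = (e\<in>g)})"
    using gP unfolding A_def graph_a_def P_def[symmetric] Pi_def by auto
  have neA: "set_pmf (corr_ER V q) \<inter> A \<noteq> {}" using assms(5) A_def by simp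
  have mA: "measure_pmf.prob (corr_ER V q) A = (\<Prod>e\<in>P. measure_pmf.prob q {x. fst x = (e\<in>g)})"
    unfolding Q Aeq by (rule measure_Pi_pmf_Pi[OF finP])
  have condeq: "cond_pmf (corr_ER V q) A = Pi_pmf P (False,False) cq"
  proof (rule pmf_eqI)
    fix \<omega>
    show "pmf (cond_pmf (corr_ER V q) A) \<omega> = pmf (Pi_pmf P (False,False) cq) \<omega>"
    proof (cases "\<forall>x. x \<notin> P \<longrightarrow> \<omega> x = (False,False)")
      case True
      show ?thesis
      proof (cases "\<omega> \<in> A")
        case True2: True
        have f: "\<And>e. e\<in>P \<Longrightarrow> fst (\<omega> e) = (e\<in>g)" using True2 Aeq by auto
        have "pmf (cond_pmf (corr_ER V q) A) \<omega> = (\<Prod>e\<in>P. pmf q (\<omega> e)) / (\<Prod>e\<in>P. measure_pmf.prob q {x. fst x = (e\<in>g)})"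
          using True True2 by (simp add: pmf_cond[OF neA] mA) (simp add: Q pmf_Pi[OF finP])
        also have "\<dots> = (\<Prod>e\<in>P. pmf q (\<omega> e) / measure_pmf.prob q {x. fst x = (e\<in>g)})"
          by (simp add: prod_dividef)
        also have "\<dots> = (\<Prod>e\<in>P. pmf (cq e) (\<omega> e))"
          by (intro prod.cong refl) (simp add: cq_def pmf_cond ne f)
        also have "\<dots> = pmf (Pi_pmf P (False,False) cq) \<omega>" using True by (simp add: pmf_Pi[OF finP])
        finally show ?thesis .
      next
        case False2: False
        then obtain e where e: "e\<in>P" "fst (\<omega> e) \<noteq> (e\<in>g)" using Aeq by auto
        have "pmf (Pi_pmf P (False,False) cq) \<omega> = (\<Prod>e\<in>P. pmf (cq e) (\<omega> e))"
          using True by (simp add: pmf_Pi[OF finP])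
        also have "\<dots> = 0" using e finP
          by (intro prod_zero) (auto intro!: bexI[of _ e] simp: cq_def pmf_cond ne)
        finally show ?thesis using False2 by (simp add: pmf_cond[OF neA])
      qed
    next
      case False
      have z1: "pmf (Pi_pmf P (False,False) cq) \<omega> = 0"
        by (simp only: pmf_Pi[OF finP] if_not_P[OF False])
      have z2: "pmf (corr_ER V q) \<omega> = 0"
        by (simp only: Q pmf_Pi[OF finP] if_not_P[OF False])
      show ?thesis by (simp add: pmf_cond[OF neA] z1 z2)
    qed
  qed
  define c where "c e s = (of_bool (s \<and> u \<in> e) - of_bool (s \<and> v \<in> e) :: real)" for e s
  have degrep: "real (deg (graph_b V \<omega>) x) = (\<Sum>e\<in>P. of_bool (snd (\<omega> e) \<and> x \<in> e))" for \<omega> x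
  proof -
    have "{e \<in> graph_b V \<omega>. x \<in> e} = P \<inter> {e. snd (\<omega> e) \<and> x \<in> e}"
      by (auto simp: graph_b_def P_def)
    then show ?thesis using finP by (simp add: deg_def)
  qed
  have Drep: "real (deg (graph_b V \<omega>) u) - real (deg (graph_b V \<omega>) v) = (\<Sum>e\<in>P. c e (snd (\<omega> e)))" for \<omega>
    unfolding degrep c_def by (simp add: sum_subtractf)
  define \<phi> where "\<phi> = real (deg g u) * \<alpha> + real (card V - 1 - deg g v) * \<beta>"
  define M where "M = max \<eta> (sqrt (\<phi> * \<eta>))"
  define lam where "lam = \<eta> / (2 * M)"
  define \<Delta> where "\<Delta> = real (deg g u) - real (deg g v)"
  have \<alpha>01: "0 \<le> \<alpha>" "\<alpha> \<le> 1" unfolding \<alpha>_def p10_def p1s_def p11_def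
    using frac01[OF pmf_nonneg pmf_nonneg] by auto
  have \<beta>01: "0 \<le> \<beta>" "\<beta> \<le> 1" unfolding \<beta>_def p01_def p0s_def p00_def
    using frac01[OF pmf_nonneg pmf_nonneg] by (auto simp: add.commute)
  have \<phi>0: "0 \<le> \<phi>" unfolding \<phi>_def using \<alpha>01 \<beta>01 by simp
  have M\<eta>: "\<eta> \<le> M" unfolding M_def by simp
  have Mpos: "0 < M" using M\<eta> assms(7) by simp
  have Msq: "\<phi> * \<eta> \<le> M^2"
  proof -
    have nn: "0 \<le> \<phi> * \<eta>" using \<phi>0 assms(7) by simp
    have "sqrt (\<phi> * \<eta>) \<le> M" unfolding M_def by simp
    hence "(sqrt (\<phi> * \<eta>))^2 \<le> M^2" using nn by (intro power_mono) auto
    then show ?thesis using nn by simp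
  qed
  have lam0: "0 < lam" using Mpos assms(7) lam_def by simp
  have lam1: "lam \<le> 1" unfolding lam_def using M\<eta> Mpos by (simp add: divide_le_eq)
  have key1: "k + 4 * M \<le> \<Delta> * (1 - (\<beta> + \<alpha>))"
  proof -
    have pos: "0 < 1 - (\<beta> + \<alpha>)" using assms(2) \<alpha>_def \<beta>_def by simp
    have "inverse (1 - (\<beta> + \<alpha>)) * (k + 4 * M) \<le> \<Delta>"
      using assms(8) unfolding \<Delta>_def M_def \<phi>_def \<alpha>_def \<beta>_def by simp
    then show ?thesis using pos by (simp add: field_simps)
  qed
  have key2: "4 * lam^2 * \<phi> \<le> \<eta>"
  proof -
    have "4 * lam^2 * \<phi> = \<eta> * (\<eta> * \<phi>) / M^2" unfolding lam_def by (simp add: power2_eq_square field_simps)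
    also have "\<dots> \<le> \<eta> * M^2 / M^2" using Msq assms(7) by (intro divide_right_mono mult_left_mono) (auto simp: mult.commute)
    also have "\<dots> = \<eta>" using Mpos by simp
    finally show ?thesis .
  qed
  define a1 where "a1 = card {e\<in>P. u\<in>e \<and> v\<notin>e \<and> e\<in>g}"
  define b1 where "b1 = card {e\<in>P. u\<in>e \<and> v\<notin>e \<and> e\<notin>g}"
  define a2 where "a2 = card {e\<in>P. v\<in>e \<and> u\<notin>e \<and> e\<in>g}"
  define b2 where "b2 = card {e\<in>P. v\<in>e \<and> u\<notin>e \<and> e\<notin>g}"
  have gP': "g \<subseteq> pairs V" using gP P_def by simp
  note cf1 = count_facts[OF assms(1,3,4) uv gP', folded P_def]
  note cf2 = count_facts[OF assms(1,4,3) uv[symmetric] gP', folded P_def]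
  have ab1: "a1 + b1 = card V - 2" using cf1(1) by (simp add: a1_def b1_def)
  have ab2: "a2 + b2 = card V - 2" using cf2(1) by (simp add: a2_def b2_def)
  obtain t where t: "t \<le> 1" "deg g u = a1 + t" using cf1(2) by (auto simp: a1_def)
  have dv: "deg g v = a2 + t" using cf1(3) cf2(4) t by (simp add: a1_def a2_def)
  have a21: "a2 < a1" using assms(6) t dv by simp
  have cV: "card V \<ge> 2"
  proof -
    have "{u,v} \<subseteq> V" using assms(3,4) by auto
    then have "card {u,v} \<le> card V" using assms(1) card_mono by blast
    then show ?thesis using uv by simp
  qed
  have b2le: "b2 \<le> card V - 1 - deg g v" using ab2 dv t cV by linarith
  have \<Delta>eq: "\<Delta> = real a1 - real a2" unfolding \<Delta>_def using t dv by simp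
  have b12: "real b1 - real b2 = real a2 - real a1" using ab1 ab2 by linarith
  define \<mu> where "\<mu> e = (if e \<in> g then (of_bool (u\<in>e) - of_bool (v\<in>e)) * (1 - \<alpha>)
                        else (of_bool (u\<in>e) - of_bool (v\<in>e)) * \<beta>)" for e
  define w where "w e = (if e \<in> g then of_bool ((u\<in>e) \<noteq> (v\<in>e)) * \<alpha>
                        else of_bool ((u\<in>e) \<noteq> (v\<in>e)) * \<beta>)" for e
  have ob: "\<And>X. (\<Sum>e\<in>P. (of_bool (X e) :: real)) = real (card {e\<in>P. X e})"
    using finP by (simp add: Int_def)
  have sum\<mu>: "(\<Sum>e\<in>P. \<mu> e) = \<Delta> * (1 - (\<beta> + \<alpha>))"
  proof -
    have "\<And>e. \<mu> e = (1-\<alpha>) * (of_bool (u\<in>e \<and> v\<notin>e \<and> e\<in>g) - of_bool (v\<in>e \<and> u\<notin>e \<and> e\<in>g))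
                     + \<beta> * (of_bool (u\<in>e \<and> v\<notin>e \<and> e\<notin>g) - of_bool (v\<in>e \<and> u\<notin>e \<and> e\<notin>g))"
      unfolding \<mu>_def by auto
    then have "(\<Sum>e\<in>P. \<mu> e) = (1-\<alpha>) * (real a1 - real a2) + \<beta> * (real b1 - real b2)"
      by (simp add: sum.distrib sum_subtractf sum_distrib_left[symmetric] ob a1_def a2_def b1_def b2_def)
    also have "\<dots> = (real a1 - real a2) * (1 - (\<beta> + \<alpha>))" unfolding b12 by (simp add: algebra_simps)
    finally show ?thesis unfolding \<Delta>eq .
  qed
  have sumw: "(\<Sum>e\<in>P. w e) \<le> 2 * \<phi>"
  proof -
    have "\<And>e. w e = \<alpha> * (of_bool (u\<in>e \<and> v\<notin>e \<and> e\<in>g) + of_bool (v\<in>e \<and> u\<notin>e \<and> e\<in>g))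
                     + \<beta> * (of_bool (u\<in>e \<and> v\<notin>e \<and> e\<notin>g) + of_bool (v\<in>e \<and> u\<notin>e \<and> e\<notin>g))"
      unfolding w_def by auto
    then have "(\<Sum>e\<in>P. w e) = \<alpha> * (real a1 + real a2) + \<beta> * (real b1 + real b2)"
      by (simp add: sum.distrib sum_distrib_left[symmetric] ob a1_def a2_def b1_def b2_def)
    also have "\<dots> \<le> \<alpha> * (2 * real (deg g u)) + \<beta> * (2 * real (card V - 1 - deg g v))"
    proof (intro add_mono mult_left_mono)
      show "real a1 + real a2 \<le> 2 * real (deg g u)" using a21 t by simp
      show "real b1 + real b2 \<le> 2 * real (card V - 1 - deg g v)" using b12 a21 b2le
        by (smt (verit) of_nat_le_iff of_nat_less_iff)
    qed (use \<alpha>01 \<beta>01 in auto)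
    also have "\<dots> = 2 * \<phi>" unfolding \<phi>_def by (simp add: algebra_simps)
    finally show ?thesis .
  qed
  have per: "measure_pmf.expectation (cq e) (\<lambda>x. exp (- lam * c e (snd x))) \<le> exp (- lam * \<mu> e + 2 * lam^2 * w e)"
    if eP: "e \<in> P" for e
  proof -
    have E: "measure_pmf.expectation (cq e) (\<lambda>x. exp (- lam * c e (snd x))) =
      (pmf q (e\<in>g,True) * exp (- lam * c e True) + pmf q (e\<in>g,False) * exp (- lam * c e False))
        / (pmf q (e\<in>g,True) + pmf q (e\<in>g,False))"
      unfolding cq_def by (rule cond_expect[OF ne[OF eP]])
    have cF: "c e False = 0" and cT: "c e True = of_bool (u\<in>e) - of_bool (v\<in>e)" by (auto simp: c_def)
    obtain y where y: "(e\<in>g, y) \<in> set_pmf q" using ne[OF eP] by auto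
    have spos: "0 < pmf q (e\<in>g,True) + pmf q (e\<in>g,False)"
    proof -
      have py: "0 < pmf q (e\<in>g, y)" using y by (simp add: pmf_positive)
      show ?thesis using py by (cases y) (auto intro: add_pos_nonneg add_nonneg_pos)
    qed
    show ?thesis
    proof (cases "e \<in> g")
      case True
      have "measure_pmf.expectation (cq e) (\<lambda>x. exp (- lam * c e (snd x)))
          = (1 - \<alpha>) * exp (- lam * (of_bool (u\<in>e) - of_bool (v\<in>e))) + \<alpha>"
        using True spos mix1[of "pmf q (True,True)" "pmf q (True,False)"] unfolding E cF cT \<alpha>_def p10_def p1s_def p11_def by simp
      also have "\<dots> \<le> exp (- lam * \<mu> e + 2 * lam^2 * w e)"
        using caseG[OF \<alpha>01(1) less_imp_le[OF lam0] lam1, of "u\<in>e" "v\<in>e"] True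
        unfolding \<mu>_def w_def by simp
      finally show ?thesis .
    next
      case False
      have "measure_pmf.expectation (cq e) (\<lambda>x. exp (- lam * c e (snd x)))
          = \<beta> * exp (- lam * (of_bool (u\<in>e) - of_bool (v\<in>e))) + (1 - \<beta>)"
        using False spos mix2[of "pmf q (False,True)" "pmf q (False,False)"] unfolding E cF cT \<beta>_def p01_def p0s_def p00_def by simp
      also have "\<dots> \<le> exp (- lam * \<mu> e + 2 * lam^2 * w e)"
        using caseN[OF \<beta>01(1) less_imp_le[OF lam0] lam1, of "u\<in>e" "v\<in>e"] False
        unfolding \<mu>_def w_def by simp
      finally show ?thesis .
    qed
  qed
  define F where "F \<omega> = exp (lam * k) * (\<Prod>e\<in>P. exp (- lam * c e (snd (\<omega> e))))" for \<omega> :: "'a set \<Rightarrow> bool \<times> bool"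
  have Fexp: "F \<omega> = exp (lam * (k - (\<Sum>e\<in>P. c e (snd (\<omega> e)))))" for \<omega>
    unfolding F_def using finP by (simp add: exp_sum[symmetric] exp_add[symmetric] algebra_simps sum_distrib_left sum_negf)
  have finS: "finite (set_pmf (Pi_pmf P (False,False) cq))"
    unfolding set_Pi_pmf[OF finP] by (rule finite_PiE_dflt[OF finP]) (rule finite_subset[OF subset_UNIV], simp)
  have intF: "integrable (measure_pmf (Pi_pmf P (False,False) cq)) F"
    by (rule integrable_measure_pmf_finite[OF finS])
  have "measure_pmf.prob (cond_pmf (corr_ER V q) A)
           {\<omega>. real (deg (graph_b V \<omega>) u) - real (deg (graph_b V \<omega>) v) \<le> k}
       \<le> measure_pmf.prob (Pi_pmf P (False,False) cq) {\<omega> \<in> space (measure_pmf (Pi_pmf P (False,False) cq)). F \<omega> \<ge> 1}"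
    unfolding condeq
  proof (rule measure_pmf.finite_measure_mono)
    show "{\<omega>. real (deg (graph_b V \<omega>) u) - real (deg (graph_b V \<omega>) v) \<le> k}
       \<subseteq> {\<omega> \<in> space (measure_pmf (Pi_pmf P (False,False) cq)). F \<omega> \<ge> 1}"
      using lam0 by (auto simp: Fexp Drep)
  qed auto
  also have "\<dots> \<le> measure_pmf.expectation (Pi_pmf P (False,False) cq) F"
  proof -
    have nnF: "AE x in measure_pmf (Pi_pmf P (False,False) cq). 0 \<le> F x"
      by (auto simp: F_def intro!: AE_pmfI mult_nonneg_nonneg prod_nonneg)
    have "measure_pmf.prob (Pi_pmf P (False,False) cq) {\<omega> \<in> space (measure_pmf (Pi_pmf P (False,False) cq)). F \<omega> \<ge> 1}
       \<le> measure_pmf.expectation (Pi_pmf P (False,False) cq) F / 1"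
      by (rule integral_Markov_inequality_measure[OF intF, of UNIV]) (auto simp: F_def intro!: AE_pmfI mult_nonneg_nonneg prod_nonneg)
    then show ?thesis by (simp only: div_by_1)
  qed
  also have "measure_pmf.expectation (Pi_pmf P (False,False) cq) F
      = exp (lam * k) * (\<Prod>e\<in>P. measure_pmf.expectation (cq e) (\<lambda>x. exp (- lam * c e (snd x))))"
  proof -
    have fincq: "finite (set_pmf (cq e))" for e by (rule finite_subset[OF subset_UNIV]) simp
    have Ep: "measure_pmf.expectation (Pi_pmf P (False,False) cq) (\<lambda>\<omega>. \<Prod>e\<in>P. exp (- lam * c e (snd (\<omega> e))))
        = (\<Prod>e\<in>P. measure_pmf.expectation (cq e) (\<lambda>x. exp (- lam * c e (snd x))))"
      by (rule expectation_prod_Pi_pmf[OF finP]) (simp_all add: integrable_measure_pmf_finite[OF fincq])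
    show ?thesis unfolding F_def integral_mult_right_zero Ep ..
  qed
  also have "\<dots> \<le> exp (lam * k) * (\<Prod>e\<in>P. exp (- lam * \<mu> e + 2 * lam^2 * w e))"
    by (intro mult_left_mono prod_mono conjI per integral_nonneg_AE AE_pmfI) auto
  also have "\<dots> = exp (lam * k) * exp (\<Sum>e\<in>P. - lam * \<mu> e + 2 * lam^2 * w e)"
    by (simp only: exp_sum[OF finP])
  also have "(\<Sum>e\<in>P. - lam * \<mu> e + 2 * lam^2 * w e) = - lam * (\<Sum>e\<in>P. \<mu> e) + 2 * lam^2 * (\<Sum>e\<in>P. w e)"
    by (simp add: sum.distrib sum_distrib_left sum_negf sum_subtractf)
  also have "exp (lam * k) * exp (- lam * (\<Sum>e\<in>P. \<mu> e) + 2 * lam^2 * (\<Sum>e\<in>P. w e))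
      = exp (lam * k - lam * (\<Sum>e\<in>P. \<mu> e) + 2 * lam^2 * (\<Sum>e\<in>P. w e))"
    by (simp add: exp_add[symmetric])
  also have "\<dots> \<le> exp (- \<eta>)"
  proof -
    have "lam * (k + 4 * M) \<le> lam * (\<Delta> * (1 - (\<beta> + \<alpha>)))" using key1 lam0 by simp
    moreover have "lam * M * 4 = 2 * \<eta>" unfolding lam_def using Mpos by simp
    moreover have "2 * lam^2 * (\<Sum>e\<in>P. w e) \<le> 2 * lam^2 * (2 * \<phi>)" using sumw by (intro mult_left_mono) auto
    ultimately have "lam * k - lam * (\<Sum>e\<in>P. \<mu> e) + 2 * lam^2 * (\<Sum>e\<in>P. w e) \<le> - \<eta>"
      using key2 unfolding sum\<mu> by (simp add: algebra_simps)
    then show ?thesis by simp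
  qed
  finally have fin: "measure_pmf.prob (cond_pmf (corr_ER V q) A)
           {\<omega>. real (deg (graph_b V \<omega>) u) - real (deg (graph_b V \<omega>) v) \<le> k} \<le> exp (- \<eta>)" .
  show ?thesis by (rule fin[unfolded A_def])
qed

end
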